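(* Let $G:=\mathrm{GL}_3(\mathbb C)$ act by conjugation on $X:=\mathfrak{sl}_3(\mathbb C)\setminus\{0\}$, let $e:=E_{12}$, $f:=E_{21}$, and let $\mathfrak s_{\mathbb C}:=e+\mathfrak{sl}_3(\mathbb C)^f=\left\{\begin{pmatrix} a&1&0\\ b&a&c\\ d&0&-2a\end{pmatrix}: a,b,c,d\in\mathbb C\right\}$. Then $\mathfrak s_{\mathbb C}$ is a slice to the action of $G$ at $e$, and for every $y\in\mathfrak s_{\mathbb C}$ the Nash manifold $\{g\in G\mid gyg^{-1}\in\mathfrak s_{\mathbb C}\}$ is connected.
   Context: $E_{ij}$ denotes the elementary matrix, and $\mathfrak{sl}_3(\mathbb C)^f$ the centralizer of $f$ in $\mathfrak{sl}_3(\mathbb C)$. A slice to the action of $G$ at $x$ is a locally closed Nash submanifold $S\subset X$ with $x\in S$ such that the action map $a:G\times S\to X$ is a submersion and $\dim(Gx)+\dim S=\dim X$ (real dimensions). *)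

theory Defs
  imports "HOL-Analysis.Analysis"
begin

type_synonym cmat = "complex^3^3"

text \<open>The group G = GL_3(C), as invertible complex 3x3 matrices.\<close>
definition GL3 :: "cmat set" where
  "GL3 = {g. invertible g}"

text \<open>sl_3(C): trace-zero complex 3x3 matrices.\<close>
definition sl3 :: "cmat set" where
  "sl3 = {A. trace A = 0}"

text \<open>X = sl_3(C) minus 0.\<close>
definition Xsl3 :: "cmat set" where
  "Xsl3 = sl3 - {0}"

text \<open>Conjugation action g . y = g y g^-1.\<close>
definition conj_act :: "cmat \<Rightarrow> cmat \<Rightarrow> cmat" where
  "conj_act g y = g ** y ** matrix_inv g"

text \<open>Elementary matrix E_ij.\<close>
definition Emat :: "3 \<Rightarrow> 3 \<Rightarrow> cmat" where
  "Emat i j = (\<chi> r c. if r = i \<and> c = j then 1 else 0)"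

definition e_mat :: cmat where "e_mat = Emat 1 2"
definition f_mat :: cmat where "f_mat = Emat 2 1"

text \<open>Centralizer of f in sl_3(C).\<close>
definition centralizer_sl3 :: "cmat \<Rightarrow> cmat set" where
  "centralizer_sl3 z = {y \<in> sl3. y ** z = z ** y}"

text \<open>The slice s_C = e + sl_3(C)^f.\<close>
definition sC :: "cmat set" where
  "sC = (\<lambda>y. e_mat + y) ` centralizer_sl3 f_mat"

text \<open>Slice to the conjugation action of GL_3(C) on X at x, for S an affine
  (hence Nash) submanifold; real dimensions; the tangent space of S at s is
  the direction space {v - s | v in S}; the tangent space of X is sl_3; the
  tangent space of the orbit G x at x is the image of the differential at the
  identity of the orbit map g |-> g x g^-1.\<close>
definition is_affine_slice :: "cmat \<Rightarrow> cmat set \<Rightarrow> bool" where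
  "is_affine_slice x S \<longleftrightarrow>
     affine S \<and> S \<subseteq> Xsl3 \<and> x \<in> S \<and>
     (\<exists>U. open U \<and> S = U \<inter> closure S) \<and>
     (\<forall>g\<in>GL3. \<forall>s\<in>S. \<exists>D.
        ((\<lambda>p. conj_act (fst p) (snd p)) has_derivative D) (at (g, s)) \<and>
        D ` (UNIV \<times> ((\<lambda>v. v - s) ` S)) = sl3) \<and>
     (\<exists>Do. ((\<lambda>g. conj_act g x) has_derivative Do) (at (mat 1)) \<and>
        dim (range Do) + dim ((\<lambda>v. v - x) ` S) = dim sl3)"

end

theory Submission
  imports Defs "HOL-Computational_Algebra.Polynomial"
begin

definition sP :: "complex \<Rightarrow> complex \<Rightarrow> complex \<Rightarrow> complex \<Rightarrow> cmat" where
 "sP a b c d = vector [vector [a, 1, 0], vector [b, a, c], vector [d, 0, -2 * a]]"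

lemma three_ne[simp]: "(1::3) \<noteq> 2" "(1::3) \<noteq> 3" "(2::3) \<noteq> 3" "(2::3) \<noteq> 1" "(3::3) \<noteq> 1" "(3::3) \<noteq> 2"
  by simp_all

lemma sP_nth: "sP a b c d $ i $ j = (if i = 1 then (if j = 1 then a else if j = 2 then 1 else 0)
   else if i = 2 then (if j = 1 then b else if j = 2 then a else c)
   else (if j = 1 then d else if j = 2 then 0 else -2*a))"
  using exhaust_3[of i] exhaust_3[of j] by (auto simp: sP_def)

lemma in_sP_iff: "(\<exists>a b c d. M = sP a b c d) \<longleftrightarrow>
   M$1$2 = 1 \<and> M$1$3 = 0 \<and> M$2$2 = M$1$1 \<and> M$3$2 = 0 \<and> M$3$3 = -2 * M$1$1"
proof
  assume "\<exists>a b c d. M = sP a b c d" then show "M$1$2 = 1 \<and> M$1$3 = 0 \<and> M$2$2 = M$1$1 \<and> M$3$2 = 0 \<and> M$3$3 = -2 * M$1$1"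
    by (auto simp: sP_nth)
next
  assume h: "M$1$2 = 1 \<and> M$1$3 = 0 \<and> M$2$2 = M$1$1 \<and> M$3$2 = 0 \<and> M$3$3 = -2 * M$1$1"
  have "M = sP (M$1$1) (M$2$1) (M$2$3) (M$3$1)"
    using h by (simp add: vec_eq_iff forall_3 sP_nth)
  then show "\<exists>a b c d. M = sP a b c d" by blast
qed

lemmas msimps = vec_eq_iff forall_3 sum_3 matrix_matrix_mult_def

lemma sC_eq: "sC = {sP a b c d | a b c d. True}"
proof
  show "sC \<subseteq> {sP a b c d | a b c d. True}"
  proof
    fix M assume "M \<in> sC"
    then obtain y where y: "y \<in> centralizer_sl3 f_mat" "M = e_mat + y" unfolding sC_def by auto
    then have "trace y = 0" "y ** f_mat = f_mat ** y" by (auto simp: centralizer_sl3_def sl3_def)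
    then have "M$1$2 = 1 \<and> M$1$3 = 0 \<and> M$2$2 = M$1$1 \<and> M$3$2 = 0 \<and> M$3$3 = -2 * M$1$1"
      using y(2) by (simp add: msimps trace_def f_mat_def e_mat_def Emat_def; auto simp: algebra_simps eq_neg_iff_add_eq_0)
    then show "M \<in> {sP a b c d | a b c d. True}" using in_sP_iff[of M] by auto
  qed
next
  show "{sP a b c d | a b c d. True} \<subseteq> sC"
  proof
    fix M assume "M \<in> {sP a b c d | a b c d. True}"
    then obtain a b c d where M: "M = sP a b c d" by auto
    let ?y = "M - e_mat"
    have "?y \<in> centralizer_sl3 f_mat" unfolding centralizer_sl3_def sl3_def
      using M by (simp add: msimps trace_def f_mat_def e_mat_def Emat_def sP_nth)
    moreover have "M = e_mat + ?y" by simp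
    ultimately show "M \<in> sC" unfolding sC_def by blast
  qed
qed

lemma cscale: "r *\<^sub>R (z::complex) = complex_of_real r * z"
  by (simp add: scaleR_conv_of_real)

lemma bilinear_mm: "bilinear ((**) :: cmat \<Rightarrow> cmat \<Rightarrow> cmat)"
  unfolding bilinear_def linear_iff
  by (simp add: msimps algebra_simps cscale)

lemma bb_mm: "bounded_bilinear ((**) :: cmat \<Rightarrow> cmat \<Rightarrow> cmat)"
  using bilinear_mm bilinear_conv_bounded_bilinear by blast

lemmas mm_deriv[derivative_intros] = bounded_bilinear.FDERIV[OF bb_mm]
lemmas mm_cont[continuous_intros] = bounded_bilinear.continuous_on[OF bb_mm]
lemmas mm_contt[continuous_intros] = bounded_bilinear.continuous[OF bb_mm]

lemma linear_mat: "linear (mat :: complex \<Rightarrow> cmat)"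
  unfolding linear_iff by (simp add: msimps mat_def cscale)

lemma bl_mat: "bounded_linear (mat :: complex \<Rightarrow> cmat)"
  using linear_mat linear_conv_bounded_linear by blast

lemmas mat_deriv[derivative_intros] = bounded_linear.has_derivative[OF bl_mat]

lemma vec_nth_deriv[derivative_intros]:
  "(f has_derivative f') F \<Longrightarrow> ((\<lambda>x. f x $ i) has_derivative (\<lambda>h. f' h $ i)) F"
  by (rule bounded_linear.has_derivative[OF bounded_linear_vec_nth])

definition dd :: "cmat \<Rightarrow> complex" where
  "dd A = A$1$1 * A$2$2 * A$3$3 + A$1$2 * A$2$3 * A$3$1 + A$1$3 * A$2$1 * A$3$2 -
    A$1$1 * A$2$3 * A$3$2 - A$1$2 * A$2$1 * A$3$3 - A$1$3 * A$2$2 * A$3$1"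

lemma det_dd: "det (A::cmat) = dd A"
  unfolding dd_def by (rule det_3)

definition tr :: "cmat \<Rightarrow> complex" where "tr A = A$1$1 + A$2$2 + A$3$3"

definition adj :: "cmat \<Rightarrow> cmat" where
  "adj X = X ** X - mat (tr X) ** X + mat ((1/2) * (tr X * tr X - tr (X ** X)))"

definition Inv :: "cmat \<Rightarrow> cmat" where
  "Inv X = mat (inverse (dd X)) ** adj X"

lemma adj_right: "X ** adj X = mat (dd X)"
  unfolding adj_def dd_def tr_def
  by (simp add: msimps mat_def field_simps)

lemma adj_left: "adj X ** X = mat (dd X)"
  unfolding adj_def dd_def tr_def
  by (simp add: msimps mat_def field_simps)

lemma invertible_inv: "invertible (A::cmat) \<Longrightarrow> A ** matrix_inv A = mat 1 \<and> matrix_inv A ** A = mat 1"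
  unfolding invertible_def matrix_inv_def by (rule someI_ex)

lemma mat_mult_mat: "mat a ** (mat b ** (M::cmat)) = mat (a*b) ** M"
  by (simp add: msimps mat_def)

lemma mat_comm: "(M::cmat) ** (mat c ** N) = mat c ** (M ** N)"
  by (simp add: msimps mat_def algebra_simps)

lemma mat_mat: "mat a ** (mat b :: cmat) = mat (a*b)"
  by (simp add: msimps mat_def)

lemma Inv_right: "dd X \<noteq> 0 \<Longrightarrow> X ** Inv X = mat 1"
  unfolding Inv_def by (simp add: mat_comm adj_right mat_mat)

lemma Inv_left: "dd X \<noteq> 0 \<Longrightarrow> Inv X ** X = mat 1"
  unfolding Inv_def by (simp add: matrix_mul_assoc[symmetric] adj_left mat_mat)

lemma inv_eq_Inv: "dd X \<noteq> 0 \<Longrightarrow> matrix_inv X = Inv X"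
proof -
  assume d: "dd X \<noteq> 0"
  then have "invertible X" by (simp add: invertible_det_nz det_dd)
  then have "matrix_inv X ** X = mat 1" using invertible_inv by blast
  then have "matrix_inv X = matrix_inv X ** (X ** Inv X)" using Inv_right[OF d] by simp
  also have "... = Inv X" by (simp add: matrix_mul_assoc \<open>matrix_inv X ** X = mat 1\<close>)
  finally show ?thesis .
qed

lemma dd_cont[continuous_intros]: "continuous_on S f \<Longrightarrow> continuous_on S (\<lambda>x. dd (f x))"
  unfolding dd_def by (intro continuous_intros)

lemma open_dd: "open {X. dd X \<noteq> 0}"
  using open_Collect_neq[of dd "\<lambda>_. 0"] by (simp add: continuous_intros dd_cont[OF continuous_on_id])

lemma dd_deriv_ex: "\<exists>D. (dd has_derivative D) (at g)"
  unfolding dd_def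
  apply (rule exI)
  apply (rule has_derivative_add has_derivative_diff has_derivative_mult vec_nth_deriv has_derivative_ident)+
  done

lemma adj_deriv_ex: "\<exists>D. (adj has_derivative D) (at g)"
  unfolding adj_def tr_def
  apply (rule exI)
  apply (rule has_derivative_add has_derivative_diff has_derivative_mult vec_nth_deriv has_derivative_ident
     mm_deriv mat_deriv has_derivative_const)+
  done

lemma Inv_deriv_ex: "dd g \<noteq> 0 \<Longrightarrow> \<exists>D. (Inv has_derivative D) (at g)"
proof -
  assume d: "dd g \<noteq> 0"
  obtain D1 where D1: "(dd has_derivative D1) (at g)" using dd_deriv_ex by blast
  obtain D2 where D2: "(adj has_derivative D2) (at g)" using adj_deriv_ex by blast
  note h = Deriv.has_derivative_inverse[OF d D1]
  from mm_deriv[OF mat_deriv[OF h] D2] show ?thesis unfolding Inv_def by blast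
qed

lemma mm_neg: "(A::cmat) ** (- B) = - (A ** B)"
  by (simp add: msimps)

lemma inv_deriv: "dd g \<noteq> 0 \<Longrightarrow>
   (matrix_inv has_derivative (\<lambda>h. - (matrix_inv g ** h ** matrix_inv g))) (at g)"
proof -
  assume d: "dd g \<noteq> 0"
  obtain D where D: "(Inv has_derivative D) (at g)" using Inv_deriv_ex[OF d] by blast
  have M: "(matrix_inv has_derivative D) (at g)"
    by (rule has_derivative_transform_within_open[OF D open_dd]) (auto simp: d inv_eq_Inv)
  have P1: "((\<lambda>X. X ** matrix_inv X) has_derivative (\<lambda>h. g ** D h + h ** matrix_inv g)) (at g)"
    using mm_deriv[OF has_derivative_ident M] by simp
  have P2: "((\<lambda>X. X ** matrix_inv X) has_derivative (\<lambda>h. 0)) (at g)"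
    by (rule has_derivative_transform_within_open[OF has_derivative_const[of "mat 1"] open_dd])
      (auto simp: d inv_eq_Inv Inv_right)
  have E: "(\<lambda>h. g ** D h + h ** matrix_inv g) = (\<lambda>h. 0)"
    using has_derivative_unique[OF P1 P2] .
  have inv: "matrix_inv g ** g = mat 1" using Inv_left[OF d] inv_eq_Inv[OF d] by simp
  have "D = (\<lambda>h. - (matrix_inv g ** h ** matrix_inv g))"
  proof
    fix h
    have "g ** D h = - (h ** matrix_inv g)" using fun_cong[OF E, of h]
      by (simp add: eq_neg_iff_add_eq_0)
    then have "matrix_inv g ** (g ** D h) = matrix_inv g ** (- (h ** matrix_inv g))" by simp
    then show "D h = - (matrix_inv g ** h ** matrix_inv g)"
      by (simp add: matrix_mul_assoc inv mm_neg)
  qed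
  then show ?thesis using M by simp
qed

lemma dim_range_inj: fixes f :: "'a::euclidean_space \<Rightarrow> 'b::euclidean_space"
  assumes "linear f" "inj f" shows "dim (range f) = DIM('a)"
  by (simp add: assms(1,2) dim_image_eq)

lemma in_sC: "M \<in> sC \<longleftrightarrow> M$1$2 = 1 \<and> M$1$3 = 0 \<and> M$2$2 = M$1$1 \<and> M$3$2 = 0 \<and> M$3$3 = -2 * M$1$1"
  unfolding sC_eq using in_sP_iff[of M] by auto

lemma affine_sC: "affine sC"
  unfolding affine_def
proof (intro ballI allI impI)
  fix x y :: cmat and u v :: real
  assume x: "x \<in> sC" and y: "y \<in> sC" and uv: "u + v = 1"
  have 1: "complex_of_real u + complex_of_real v = 1" using uv by (metis of_real_1 of_real_add)
  show "u *\<^sub>R x + v *\<^sub>R y \<in> sC"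
    using x y 1 unfolding in_sC by (simp add: cscale algebra_simps)
qed

lemma closed_sC: "closed sC"
  by (rule affine_closed[OF affine_sC])

lemma sC_sub: "sC \<subseteq> Xsl3"
proof
  fix M assume "M \<in> sC"
  then have h: "M$1$2 = 1 \<and> M$1$3 = 0 \<and> M$2$2 = M$1$1 \<and> M$3$2 = 0 \<and> M$3$3 = -2 * M$1$1"
    by (simp add: in_sC)
  then have "trace M = 0" by (simp add: trace_def sum_3)
  moreover have "M \<noteq> 0" proof assume "M = 0" then show False using h by simp qed
  ultimately show "M \<in> Xsl3" by (simp add: Xsl3_def sl3_def)
qed

lemma e_in_sC: "e_mat \<in> sC"
  by (simp add: in_sC e_mat_def Emat_def)

lemma trace_sC: "s \<in> sC \<Longrightarrow> trace s = 0"
  using sC_sub by (auto simp: Xsl3_def sl3_def)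

lemma solve: assumes "s \<in> sC" "trace w = 0"
  shows "\<exists>h N. h ** s - s ** h + N = w \<and> s + N \<in> sC"
proof -
  have s: "s$1$2 = 1 \<and> s$1$3 = 0 \<and> s$2$2 = s$1$1 \<and> s$3$2 = 0 \<and> s$3$3 = -2 * s$1$1"
    using assms(1) by (simp add: in_sC)
  have w33: "w$3$3 = - w$1$1 - w$2$2" using assms(2) by (simp add: trace_def sum_3 algebra_simps eq_neg_iff_add_eq_0)
  define a where "a = s$1$1"
  define b where "b = s$2$1"
  define c where "c = s$2$3"
  define d where "d = s$3$1"
  define q where "q = w$1$2"
  define p where "p = (w$2$2 - w$1$1)/2"
  define r where "r = - w$1$3"
  define t where "t = w$3$2"
  define al where "al = (w$1$1 + w$2$2)/2"
  define h :: cmat where "h = vector [vector [q, 0, 0], vector [p, 0, r], vector [t, 0, 0]]"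
  define N :: cmat where "N = vector [vector [al, 0, 0], vector [w$2$1 - d*r + b*q + c*t, al, w$2$3 + 3*a*r],
       vector [w$3$1 - 3*a*t + d*q, 0, -2*al]]"
  have "h ** s - s ** h + N = w"
    using s w33 unfolding h_def N_def a_def b_def c_def d_def p_def q_def r_def t_def al_def
    by (simp add: msimps field_simps w33)
  moreover have "s + N \<in> sC" using s unfolding in_sC N_def al_def by (simp add: algebra_simps)
  ultimately show ?thesis by blast
qed

definition Dgs :: "cmat \<Rightarrow> cmat \<Rightarrow> cmat \<times> cmat \<Rightarrow> cmat" where
 "Dgs g s q = g ** s ** (- (matrix_inv g ** fst q ** matrix_inv g)) + (g ** snd q + fst q ** s) ** matrix_inv g"

lemma conj_deriv: assumes d: "dd g \<noteq> 0"
  shows "((\<lambda>p. conj_act (fst p) (snd p)) has_derivative Dgs g s) (at (g,s))"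
proof -
  have f1: "((\<lambda>p. fst p ** snd p) has_derivative (\<lambda>q. fst (g,s) ** snd q + fst q ** snd (g,s))) (at (g,s))"
    by (intro mm_deriv has_derivative_fst has_derivative_snd has_derivative_ident)
  have i: "(matrix_inv has_derivative (\<lambda>h. -(matrix_inv g ** h ** matrix_inv g))) (at (fst (g,s)))"
    using inv_deriv[OF d] by simp
  note f2 = has_derivative_compose[OF has_derivative_fst[OF has_derivative_ident] i]
  show ?thesis unfolding conj_act_def Dgs_def using mm_deriv[OF f1 f2] by (simp only: prod.sel)
qed

lemma mm_ldiff: "(A::cmat) ** (B - C) = A ** B - A ** C" by (simp add: msimps algebra_simps)
lemma mm_rdiff: "((B::cmat) - C) ** A = B ** A - C ** A" by (simp add: msimps algebra_simps)
lemma mm_ladd: "(A::cmat) ** (B + C) = A ** B + A ** C" by (simp add: msimps algebra_simps)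
lemma mm_radd: "((B::cmat) + C) ** A = B ** A + C ** A" by (simp add: msimps algebra_simps)
lemma mm_lneg: "(- (B::cmat)) ** A = - (B ** A)" by (simp add: msimps)

lemma Dgs_form: assumes "matrix_inv g ** g = mat 1" "g ** matrix_inv g = mat 1"
  shows "Dgs g s (h, v) = g ** ((matrix_inv g ** h) ** s - s ** (matrix_inv g ** h) + v) ** matrix_inv g"
  unfolding Dgs_def
  apply (simp only: mm_ldiff mm_rdiff mm_ladd mm_radd mm_neg mm_lneg matrix_mul_assoc assms matrix_mul_lid fst_conv snd_conv)
  apply (simp add: algebra_simps)
  done

lemma trace_conj: assumes "(A::cmat) ** g = mat 1" shows "trace (g ** W ** A) = trace W"
proof -
  have "trace ((g ** W) ** A) = trace (A ** (g ** W))" by (rule trace_mul_sym)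
  also have "A ** (g ** W) = W" by (simp add: matrix_mul_assoc assms)
  finally show ?thesis .
qed

lemma invertible_dd: "g \<in> GL3 \<Longrightarrow> dd g \<noteq> 0"
  by (simp add: GL3_def invertible_det_nz det_dd)

lemma Dgs_image: assumes g: "g \<in> GL3" and s: "s \<in> sC"
  shows "Dgs g s ` (UNIV \<times> ((\<lambda>v. v - s) ` sC)) = sl3"
proof -
  have inv: "matrix_inv g ** g = mat 1" "g ** matrix_inv g = mat 1"
    using g invertible_inv by (auto simp: GL3_def)
  show ?thesis
  proof
    show "Dgs g s ` (UNIV \<times> ((\<lambda>v. v - s) ` sC)) \<subseteq> sl3"
    proof
      fix z assume "z \<in> Dgs g s ` (UNIV \<times> ((\<lambda>v. v - s) ` sC))"
      then obtain h s' where s': "s' \<in> sC" and z: "z = Dgs g s (h, s' - s)" by auto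
      have "trace z = trace ((matrix_inv g ** h) ** s - s ** (matrix_inv g ** h) + (s' - s))"
        unfolding z Dgs_form[OF inv] by (rule trace_conj[OF inv(1)])
      also have "... = 0"
        using trace_mul_sym[of "matrix_inv g ** h" s]
        by (simp add: trace_add trace_sub trace_sC[OF s] trace_sC[OF s'])
      finally show "z \<in> sl3" by (simp add: sl3_def)
    qed
  next
    show "sl3 \<subseteq> Dgs g s ` (UNIV \<times> ((\<lambda>v. v - s) ` sC))"
    proof
      fix z assume z: "z \<in> sl3"
      define w where "w = matrix_inv g ** z ** g"
      have "trace w = 0" unfolding w_def using trace_conj[of g "matrix_inv g" z] inv z
        by (simp add: sl3_def)
      then obtain h N where hN: "h ** s - s ** h + N = w" "s + N \<in> sC" using solve[OF s] by blast
      have "Dgs g s (g ** h, N) = g ** w ** matrix_inv g"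
      proof -
        have "matrix_inv g ** (g ** h) = h" by (simp add: matrix_mul_assoc inv)
        then show ?thesis unfolding Dgs_form[OF inv] by (simp only: hN(1))
      qed
      also have "... = (g ** matrix_inv g) ** z ** (g ** matrix_inv g)" unfolding w_def
        by (simp only: matrix_mul_assoc)
      also have "... = z" by (simp add: inv)
      finally have "z = Dgs g s (g ** h, (s + N) - s)" by simp
      moreover have "(g ** h, (s + N) - s) \<in> UNIV \<times> ((\<lambda>v. v - s) ` sC)" using hN(2) by blast
      ultimately show "z \<in> Dgs g s ` (UNIV \<times> ((\<lambda>v. v - s) ` sC))" by blast
    qed
  qed
qed

lemma inv_unique: "(A::cmat) ** B = mat 1 \<Longrightarrow> B ** A = mat 1 \<Longrightarrow> matrix_inv A = B"
proof -
  assume 1: "A ** B = mat 1" and 2: "B ** A = mat 1"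
  then have "invertible A" unfolding invertible_def by blast
  then have "matrix_inv A ** A = mat 1" using invertible_inv by blast
  then have "matrix_inv A = matrix_inv A ** (A ** B)" using 1 by simp
  also have "... = B" by (simp add: matrix_mul_assoc \<open>matrix_inv A ** A = mat 1\<close>)
  finally show ?thesis .
qed

lemma inv_one: "matrix_inv (mat 1 :: cmat) = mat 1"
  by (rule inv_unique) simp_all

lemma dd_one: "dd (mat 1) \<noteq> 0" by (simp add: dd_def mat_def)

lemma Do_deriv: "((\<lambda>g. conj_act g e_mat) has_derivative (\<lambda>h. Dgs (mat 1) e_mat (h, 0))) (at (mat 1))"
proof -
  have p: "((\<lambda>g. (g, e_mat)) has_derivative (\<lambda>h. (h, 0))) (at (mat 1))"
    by (intro has_derivative_Pair has_derivative_ident has_derivative_const)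
  have c: "((\<lambda>p. conj_act (fst p) (snd p)) has_derivative Dgs (mat 1) e_mat) (at (mat 1, e_mat))"
    by (rule conj_deriv[OF dd_one])
  from has_derivative_compose[OF p c] show ?thesis by simp
qed

lemma Do_eq: "Dgs (mat 1) e_mat (h, 0) = h ** e_mat - e_mat ** h"
  unfolding Dgs_def inv_one by (simp add: mm_neg)

definition L1 :: "complex^2^2 \<Rightarrow> cmat" where
  "L1 x = vector [vector [x$1$1, x$1$2, x$2$1], vector [0, -x$1$1, 0], vector [0, x$2$2, 0]]"
definition L2 :: "complex^2^2 \<Rightarrow> cmat" where
  "L2 x = vector [vector [x$1$1, 0, 0], vector [x$1$2, x$1$1, x$2$1], vector [x$2$2, 0, -2*x$1$1]]"
definition L3 :: "complex^2^2^2 \<Rightarrow> cmat" where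
  "L3 x = vector [vector [x$1$1$1, x$1$1$2, x$1$2$1], vector [x$1$2$2, x$2$1$1, x$2$1$2],
     vector [x$2$2$1, x$2$2$2, -(x$1$1$1 + x$2$1$1)]]"

lemma linear_L1: "linear L1" unfolding linear_iff L1_def by (simp add: msimps cscale algebra_simps)
lemma linear_L2: "linear L2" unfolding linear_iff L2_def by (simp add: msimps cscale algebra_simps)
lemma linear_L3: "linear L3" unfolding linear_iff L3_def by (simp add: msimps cscale algebra_simps)
lemma inj_L1: "inj L1" unfolding inj_def L1_def by (simp add: vec_eq_iff forall_2 forall_3)
lemma inj_L2: "inj L2" unfolding inj_def L2_def by (simp add: vec_eq_iff forall_2 forall_3)
lemma inj_L3: "inj L3" unfolding inj_def L3_def by (simp add: vec_eq_iff forall_2 forall_3)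

lemma range_L1: "range (\<lambda>h. Dgs (mat 1) e_mat (h, 0)) = range L1"
proof -
  have "range (\<lambda>h. h ** e_mat - e_mat ** h) = range L1"
  proof
    show "range (\<lambda>h. h ** e_mat - e_mat ** h) \<subseteq> range L1"
    proof
      fix M assume "M \<in> range (\<lambda>h. h ** e_mat - e_mat ** h)"
      then obtain h where M: "M = h ** e_mat - e_mat ** h" by auto
      have "M = L1 (vector [vector [-h$2$1, h$1$1 - h$2$2], vector [-h$2$3, h$3$1]])"
        unfolding M L1_def by (simp add: msimps e_mat_def Emat_def)
      then show "M \<in> range L1" by blast
    qed
  next
    show "range L1 \<subseteq> range (\<lambda>h. h ** e_mat - e_mat ** h)"
    proof
      fix M assume "M \<in> range L1"
      then obtain x where M: "M = L1 x" by auto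
      have "M = (\<lambda>h. h ** e_mat - e_mat ** h) (vector [vector [x$1$2, 0, 0], vector [-x$1$1, 0, -x$2$1], vector [x$2$2, 0, 0]])"
        unfolding M L1_def by (simp add: msimps e_mat_def Emat_def)
      then show "M \<in> range (\<lambda>h. h ** e_mat - e_mat ** h)" by blast
    qed
  qed
  then show ?thesis by (simp add: Do_eq)
qed

lemma range_L2: "(\<lambda>v. v - e_mat) ` sC = range L2"
proof
  show "(\<lambda>v. v - e_mat) ` sC \<subseteq> range L2"
  proof
    fix M assume "M \<in> (\<lambda>v. v - e_mat) ` sC"
    then obtain v where v: "v \<in> sC" "M = v - e_mat" by auto
    have "M = L2 (vector [vector [v$1$1, v$2$1], vector [v$2$3, v$3$1]])"
      using v(1) unfolding v(2) L2_def in_sC by (simp add: msimps e_mat_def Emat_def)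
    then show "M \<in> range L2" by blast
  qed
next
  show "range L2 \<subseteq> (\<lambda>v. v - e_mat) ` sC"
  proof
    fix M assume "M \<in> range L2"
    then obtain x where M: "M = L2 x" by auto
    have "M + e_mat \<in> sC" unfolding M L2_def in_sC by (simp add: e_mat_def Emat_def)
    moreover have "M = (M + e_mat) - e_mat" by simp
    ultimately show "M \<in> (\<lambda>v. v - e_mat) ` sC" by blast
  qed
qed

lemma range_L3: "sl3 = range L3"
proof
  show "sl3 \<subseteq> range L3"
  proof
    fix M assume "M \<in> sl3"
    then have t: "M$3$3 = - (M$1$1 + M$2$2)" by (simp add: sl3_def trace_def sum_3 eq_neg_iff_add_eq_0 algebra_simps)
    have "M = L3 (vector [vector [vector [M$1$1, M$1$2], vector [M$1$3, M$2$1]],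
                          vector [vector [M$2$2, M$2$3], vector [M$3$1, M$3$2]]])"
      unfolding L3_def using t by (simp add: msimps)
    then show "M \<in> range L3" by blast
  qed
next
  show "range L3 \<subseteq> sl3" unfolding L3_def sl3_def by (auto simp: trace_def sum_3)
qed

lemma dims: "dim (range (\<lambda>h. Dgs (mat 1) e_mat (h, 0))) + dim ((\<lambda>v. v - e_mat) ` sC) = dim sl3"
  unfolding range_L1 range_L2 range_L3
  by (simp add: dim_range_inj linear_L1 linear_L2 linear_L3 inj_L1 inj_L2 inj_L3)

lemma slice: "is_affine_slice e_mat sC"
  unfolding is_affine_slice_def
proof (intro conjI)
  show "affine sC" by (rule affine_sC)
  show "sC \<subseteq> Xsl3" by (rule sC_sub)
  show "e_mat \<in> sC" by (rule e_in_sC)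
  show "\<exists>U. open U \<and> sC = U \<inter> closure sC"
    by (rule exI[of _ UNIV]) (simp add: closed_sC closure_closed)
  show "\<forall>g\<in>GL3. \<forall>s\<in>sC. \<exists>D. ((\<lambda>p. conj_act (fst p) (snd p)) has_derivative D) (at (g, s)) \<and>
        D ` (UNIV \<times> (\<lambda>v. v - s) ` sC) = sl3"
    using conj_deriv invertible_dd Dgs_image by blast
  show "\<exists>Do. ((\<lambda>g. conj_act g e_mat) has_derivative Do) (at (mat 1)) \<and>
        dim (range Do) + dim ((\<lambda>v. v - e_mat) ` sC) = dim sl3"
    using Do_deriv dims by blast
qed

definition cols3 :: "complex^3 \<Rightarrow> complex^3 \<Rightarrow> complex^3 \<Rightarrow> cmat" where
  "cols3 a b c = (\<chi> i j. if j = 1 then a$i else if j = 2 then b$i else c$i)"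

lemma cols3_nth[simp]: "cols3 a b c $ i $ 1 = a$i" "cols3 a b c $ i $ 2 = b$i" "cols3 a b c $ i $ 3 = c$i"
  by (simp_all add: cols3_def)

definition d3 :: "complex^3 \<Rightarrow> complex^3 \<Rightarrow> complex^3 \<Rightarrow> complex" where
  "d3 a b c = dd (cols3 a b c)"

lemma d3_expand: "d3 a b c = a$1 * b$2 * c$3 + b$1 * c$2 * a$3 + c$1 * a$2 * b$3
   - a$1 * c$2 * b$3 - b$1 * a$2 * c$3 - c$1 * b$2 * a$3"
  by (simp add: d3_def dd_def)

lemma vsimps: "(a + b)$i = a$i + b$i" "(a - b)$i = a$i - b$i" "(c *s a)$i = c * a$i" "(-a)$i = - a$i"
  by simp_all

lemma mv3: "((y::cmat) *v v) $ i = y$i$1 * v$1 + y$i$2 * v$2 + y$i$3 * v$3"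
  by (simp add: matrix_vector_mult_def sum_3)

lemma d3_i: "d3 v p (z + c *s v) = d3 v p z"
  by (simp add: d3_expand algebra_simps)

lemma d3_ii: "d3 v (z + c *s v) (q + c *s p) = d3 v z q - c * d3 v p z"
  by (simp add: d3_expand algebra_simps)

lemma d3_iii: "d3 v w (x1 *s v + x2 *s p + x3 *s w) = - x2 * d3 v p w"
  by (simp add: d3_expand algebra_simps)

lemma d3_iv: "d3 v (k1 + a *s v) z = - d3 k1 v z"
  by (simp add: d3_expand algebra_simps)

lemma d3_v: "d3 v z (c *s v + b *s z) = 0"
  by (simp add: d3_expand algebra_simps)

lemma mm_cols3: "(A::cmat) ** cols3 a b c = cols3 (A *v a) (A *v b) (A *v c)"
  by (simp add: msimps mv3)

lemma cols3_mv: "cols3 a b c *v x = x$1 *s a + x$2 *s b + x$3 *s c"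
  by (simp add: vec_eq_iff forall_3 mv3 algebra_simps)

lemma mv_dist: "(y::cmat) *v (z + c *s v) = y *v z + c *s (y *v v)"
  by (simp add: vec_eq_iff forall_3 mv3 algebra_simps)

lemma mv_diff: "(y::cmat) *v (z - c *s v) = y *v z - c *s (y *v v)"
  by (simp add: vec_eq_iff forall_3 mv3 algebra_simps)

lemma cols3_eta: "(k::cmat) = cols3 (k *v vector[1,0,0]) (k *v vector[0,1,0]) (k *v vector[0,0,1])"
  by (simp add: vec_eq_iff forall_3 mv3)

lemma mv_mm: "(A::cmat) *v (B *v x) = (A ** B) *v x"
  by (simp add: matrix_vector_mul_assoc)

definition alpha :: "cmat \<Rightarrow> complex^3 \<Rightarrow> complex^3 \<Rightarrow> complex" where
  "alpha y v z = d3 v z (y *v z) / d3 v (y *v v) z"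
definition wv :: "cmat \<Rightarrow> complex^3 \<Rightarrow> complex^3 \<Rightarrow> complex^3" where
  "wv y v z = z + alpha y v z *s v"
definition Km :: "cmat \<Rightarrow> complex^3 \<Rightarrow> complex^3 \<Rightarrow> cmat" where
  "Km y v z = cols3 v (y *v v) (wv y v z)"
definition aa :: "cmat \<Rightarrow> complex^3 \<Rightarrow> complex^3 \<Rightarrow> complex" where
  "aa y v z = - ((matrix_inv (Km y v z) ** y ** Km y v z) $3$3) / 2"
definition km :: "cmat \<Rightarrow> complex^3 \<Rightarrow> complex^3 \<Rightarrow> cmat" where
  "km y v z = cols3 (y *v v - aa y v z *s v) v (wv y v z)"

lemma MT_lemma:
  assumes "M$1$1 = 0" "M$2$1 = 1" "M$3$1 = 0" "M$2$3 = 0" "M$2$2 = 2*a" "M$3$3 = -2*a"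
  shows "(M::cmat) ** cols3 (vector[-a,1,0]) (vector[1,0,0]) (vector[0,0,1]) =
     cols3 (vector[-a,1,0]) (vector[1,0,0]) (vector[0,0,1]) ** sP a (M$1$2 + a^2) (M$1$3) (M$3$2)"
  using assms by (simp add: msimps sP_nth power2_eq_square algebra_simps)

lemma dd_mul: "dd ((A::cmat) ** B) = dd A * dd B"
  by (metis det_dd det_mul)

lemma dd_inv: "dd (k::cmat) \<noteq> 0 \<Longrightarrow> matrix_inv k ** k = mat 1 \<and> k ** matrix_inv k = mat 1"
  using invertible_inv invertible_det_nz det_dd by metis

lemma claimA: assumes y: "y \<in> sC" and D0: "d3 v (y *v v) z \<noteq> 0"
  shows "matrix_inv (km y v z) \<in> GL3 \<and> conj_act (matrix_inv (km y v z)) y \<in> sC \<and> dd (km y v z) \<noteq> 0"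
proof -
  define w where "w = wv y v z"
  define K where "K = Km y v z"
  define al where "al = alpha y v z"
  have Kw: "K = cols3 v (y *v v) w" unfolding K_def Km_def w_def ..
  have w: "w = z + al *s v" unfolding w_def wv_def al_def ..
  have dK: "dd K = d3 v (y *v v) z" unfolding Kw d3_def[symmetric] w by (rule d3_i)
  have dw: "d3 v w (y *v w) = 0"
  proof -
    have "d3 v w (y *v w) = d3 v z (y *v z) - al * d3 v (y *v v) z"
      unfolding w mv_dist by (rule d3_ii)
    also have "... = 0" unfolding al_def alpha_def using D0 by simp
    finally show ?thesis .
  qed
  have iK: "matrix_inv K ** K = mat 1" "K ** matrix_inv K = mat 1" using dd_inv[of K] dK D0 by auto
  define M where "M = matrix_inv K ** y ** K"
  have yK: "y ** K = K ** M" unfolding M_def by (simp add: matrix_mul_assoc iK)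
  define c3 where "c3 = matrix_inv K *v (y *v w)"
  have KA: "K *v (matrix_inv K *v x) = x" "matrix_inv K *v (K *v x) = x" for x by (simp_all add: mv_mm iK)
  have Kc3: "K *v c3 = y *v w" unfolding c3_def by (rule KA)
  have yKc: "y ** K = cols3 (y *v v) (y *v (y *v v)) (y *v w)" unfolding Kw mm_cols3 ..
  have Mc: "M = cols3 (matrix_inv K *v (y *v v)) (matrix_inv K *v (y *v (y *v v))) c3"
  proof -
    have "M = matrix_inv K ** (y ** K)" unfolding M_def by (simp add: matrix_mul_assoc)
    then show ?thesis unfolding yKc mm_cols3 c3_def .
  qed
  have e2: "matrix_inv K *v (y *v v) = vector[0,1,0]"
  proof -
    have "K *v vector[0,1,0] = y *v v" unfolding Kw cols3_mv by simp
    then show ?thesis using KA(2)[of "vector[0,1,0]"] by simp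
  qed
  have M1: "M$i$1 = (vector[0,1,0] :: complex^3)$i" for i unfolding Mc e2 by simp
  have M3: "M$i$3 = c3$i" for i unfolding Mc by simp
  have c32: "c3$2 = 0"
  proof -
    have "d3 v w (y *v w) = d3 v w (c3$1 *s v + c3$2 *s (y *v v) + c3$3 *s w)"
      unfolding Kc3[symmetric] Kw cols3_mv ..
    also have "... = - c3$2 * d3 v (y *v v) w" by (rule d3_iii)
    also have "... = - c3$2 * dd K" unfolding Kw d3_def ..
    finally show ?thesis using dw dK D0 by simp
  qed
  have trM: "trace M = 0" unfolding M_def using trace_conj[OF iK(2), of y] trace_sC[OF y] by simp
  define a where "a = aa y v z"
  have a: "a = - M$3$3 / 2" unfolding a_def aa_def M_def K_def ..
  have tr3: "M$1$1 + M$2$2 + M$3$3 = 0" using trM by (simp add: trace_def sum_3)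
  have m33: "M$3$3 = -2*a" using a by (simp add: field_simps)
  have "M$2$2 = - M$3$3" using tr3 M1[of 1] by (simp add: eq_neg_iff_add_eq_0)
  then have m22: "M$2$2 = 2*a" using m33 by simp
  have Ment: "M$1$1 = 0" "M$2$1 = 1" "M$3$1 = 0" "M$2$3 = 0" "M$2$2 = 2*a" "M$3$3 = -2*a"
    using M1[of 1] M1[of 2] M1[of 3] M3[of 2] c32 m22 m33 by auto
  define T :: cmat where "T = cols3 (vector[-a,1,0]) (vector[1,0,0]) (vector[0,0,1])"
  define s' where "s' = sP a (M$1$2 + a^2) (M$1$3) (M$3$2)"
  define k where "k = km y v z"
  have kKT: "k = K ** T" unfolding k_def km_def T_def Kw mm_cols3 cols3_mv w_def a_def
    by (simp add: algebra_simps)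
  have MT: "M ** T = T ** s'" unfolding T_def s'_def by (rule MT_lemma[OF Ment])
  have yk: "y ** k = k ** s'"
    unfolding kKT by (metis MT matrix_mul_assoc yK)
  have dT: "dd T = -1" unfolding T_def by (simp add: dd_def)
  have dk: "dd k \<noteq> 0" unfolding kKT dd_mul dT using dK D0 by simp
  have ik: "matrix_inv k ** k = mat 1" "k ** matrix_inv k = mat 1" using dd_inv[OF dk] by auto
  have "matrix_inv k \<in> GL3" unfolding GL3_def invertible_def using ik by blast
  moreover have "conj_act (matrix_inv k) y = s'"
  proof -
    have "matrix_inv (matrix_inv k) = k" by (rule inv_unique) (use ik in auto)
    then have "conj_act (matrix_inv k) y = matrix_inv k ** (y ** k)"
      unfolding conj_act_def by (simp add: matrix_mul_assoc)
    also have "... = s'" unfolding yk by (simp add: matrix_mul_assoc ik)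
    finally show ?thesis .
  qed
  moreover have "s' \<in> sC" unfolding s'_def sC_eq by blast
  ultimately show ?thesis using dk unfolding k_def by simp
qed

lemma claimB: assumes g: "g \<in> GL3" and s: "conj_act g y \<in> sC"
  shows "\<exists>v z. d3 v (y *v v) z \<noteq> 0 \<and> matrix_inv (km y v z) = g"
proof -
  define k where "k = matrix_inv g"
  have ig: "g ** k = mat 1" "k ** g = mat 1" using g invertible_inv unfolding GL3_def k_def by auto
  define S where "S = conj_act g y"
  have Sk: "S = g ** y ** k" unfolding S_def conj_act_def k_def ..
  have Se: "S$1$2 = 1" "S$1$3 = 0" "S$2$2 = S$1$1" "S$3$2 = 0" "S$3$3 = -2 * S$1$1"
    using s unfolding S_def[symmetric] in_sC by auto
  define a where "a = S$1$1"
  define c where "c = S$2$3"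
  have yk: "y ** k = k ** S" unfolding Sk by (simp add: matrix_mul_assoc ig)
  define k1 where "k1 = k *v vector[1,0,0]"
  define v where "v = k *v vector[0,1,0]"
  define z where "z = k *v vector[0,0,1]"
  have kc: "k = cols3 k1 v z" unfolding k1_def v_def z_def by (rule cols3_eta)
  have yv: "y *v v = k1 + a *s v"
  proof -
    have "y *v v = k *v (S *v vector[0,1,0])" unfolding v_def mv_mm yk ..
    also have "S *v vector[0,1,0] = vector[1, a, 0]" using Se unfolding a_def
      by (simp add: vec_eq_iff forall_3 mv3)
    also have "k *v vector[1, a, 0] = k1 + a *s v" by (subst kc) (simp add: cols3_mv)
    finally show ?thesis .
  qed
  have yz: "y *v z = c *s v + (-2*a) *s z"
  proof -
    have "y *v z = k *v (S *v vector[0,0,1])" unfolding z_def mv_mm yk ..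
    also have "S *v vector[0,0,1] = vector[0, c, -2*a]" using Se unfolding a_def c_def
      by (simp add: vec_eq_iff forall_3 mv3)
    also have "k *v vector[0, c, -2*a] = c *s v + (-2*a) *s z" by (subst kc) (simp add: cols3_mv)
    finally show ?thesis .
  qed
  have dk: "dd k \<noteq> 0"
  proof -
    have "invertible k" unfolding invertible_def using ig by blast
    then show ?thesis by (simp add: invertible_det_nz det_dd)
  qed
  have D0: "d3 v (y *v v) z = - dd k"
  proof -
    have "d3 v (y *v v) z = - d3 k1 v z" unfolding yv by (rule d3_iv)
    also have "... = - dd k" unfolding kc d3_def ..
    finally show ?thesis .
  qed
  have D0': "d3 v (y *v v) z \<noteq> 0" using D0 dk by simp
  have al: "alpha y v z = 0" unfolding alpha_def yz d3_v by simp
  have w: "wv y v z = z" unfolding wv_def al by simp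
  define K where "K = Km y v z"
  have Kw: "K = cols3 v (y *v v) z" unfolding K_def Km_def w ..
  have iK: "matrix_inv K ** K = mat 1" using dd_inv[of K] D0' unfolding Kw d3_def by auto
  have "matrix_inv K ** y ** K = matrix_inv K ** (y ** K)" by (simp add: matrix_mul_assoc)
  also have "... = cols3 (matrix_inv K *v (y *v v)) (matrix_inv K *v (y *v (y *v v))) (matrix_inv K *v (y *v z))"
    unfolding Kw mm_cols3 ..
  finally have M: "(matrix_inv K ** y ** K) $3$3 = (matrix_inv K *v (y *v z))$3" by simp
  have "y *v z = K *v vector[c, 0, -2*a]" unfolding yz Kw cols3_mv by simp
  then have "matrix_inv K *v (y *v z) = vector[c, 0, -2*a]" by (simp add: mv_mm iK)
  then have "aa y v z = a" unfolding aa_def K_def[symmetric] M by simp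
  then have "km y v z = k" unfolding km_def w yv by (simp add: kc)
  moreover have "matrix_inv k = g" by (rule inv_unique) (use ig in auto)
  ultimately show ?thesis using D0' by auto
qed

lemma cont_cols3: "continuous_on S f \<Longrightarrow> continuous_on S g \<Longrightarrow> continuous_on S h \<Longrightarrow>
   continuous_on S (\<lambda>x. cols3 (f x) (g x) (h x))"
  unfolding cols3_def
  apply (intro continuous_on_vec_lambda)
  subgoal for i j by (cases "j = 1"; cases "j = 2"; simp add: continuous_on_component)
  done

lemma cont_mv: "continuous_on S f \<Longrightarrow> continuous_on S (\<lambda>x. (y::cmat) *v f x)"
  using continuous_on_compose2[OF matrix_vector_mult_linear_continuous_on[of UNIV y]] by blast

lemma cont_smul: "continuous_on S f \<Longrightarrow> continuous_on S g \<Longrightarrow> continuous_on S (\<lambda>x. (f x::complex) *s (g x :: complex^3))"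
proof -
  assume f: "continuous_on S f" and g: "continuous_on S g"
  have "(\<lambda>x. f x *s g x) = (\<lambda>x. \<chi> i. f x * g x $ i)" by (simp add: vector_scalar_mult_def)
  show ?thesis unfolding \<open>(\<lambda>x. f x *s g x) = (\<lambda>x. \<chi> i. f x * g x $ i)\<close>
    by (intro continuous_on_vec_lambda continuous_on_mult continuous_on_component f g)
qed

lemma cont_d3: "continuous_on S f \<Longrightarrow> continuous_on S g \<Longrightarrow> continuous_on S h \<Longrightarrow>
   continuous_on S (\<lambda>x. d3 (f x) (g x) (h x))"
  unfolding d3_expand by (intro continuous_intros)

lemma cont_inv: "continuous_on {X::cmat. dd X \<noteq> 0} matrix_inv"
  by (rule continuous_at_imp_continuous_on) (auto intro: has_derivative_continuous inv_deriv)

definition Dom :: "cmat \<Rightarrow> ((complex^3) \<times> (complex^3)) set" where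
  "Dom y = {p. d3 (fst p) (y *v fst p) (snd p) \<noteq> 0}"

definition Fm :: "cmat \<Rightarrow> (complex^3) \<times> (complex^3) \<Rightarrow> cmat" where
  "Fm y p = matrix_inv (km y (fst p) (snd p))"

lemma cont_Fm: assumes y: "y \<in> sC" shows "continuous_on (Dom y) (Fm y)"
proof -
  let ?D = "Dom y"
  have cv: "continuous_on ?D (\<lambda>p. fst p)" and cz: "continuous_on ?D (\<lambda>p. snd p)"
    by (intro continuous_intros)+
  have cyv: "continuous_on ?D (\<lambda>p. y *v fst p)" by (rule cont_mv[OF cv])
  have cyz: "continuous_on ?D (\<lambda>p. y *v snd p)" by (rule cont_mv[OF cz])
  have cal: "continuous_on ?D (\<lambda>p. alpha y (fst p) (snd p))"
    unfolding alpha_def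
    by (rule continuous_on_divide[OF cont_d3[OF cv cz cyz] cont_d3[OF cv cyv cz]]) (auto simp: Dom_def)
  have cw: "continuous_on ?D (\<lambda>p. wv y (fst p) (snd p))"
    unfolding wv_def by (intro continuous_on_add cz cont_smul cal cv)
  have cK: "continuous_on ?D (\<lambda>p. Km y (fst p) (snd p))"
    unfolding Km_def by (rule cont_cols3[OF cv cyv cw])
  have dK: "dd (Km y (fst p) (snd p)) \<noteq> 0" if "p \<in> ?D" for p
  proof -
    have "dd (Km y (fst p) (snd p)) = d3 (fst p) (y *v fst p) (snd p)"
      unfolding Km_def wv_def d3_def[symmetric] by (rule d3_i)
    then show ?thesis using that by (simp add: Dom_def)
  qed
  have ciK: "continuous_on ?D (\<lambda>p. matrix_inv (Km y (fst p) (snd p)))"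
    by (rule continuous_on_compose2[OF cont_inv cK]) (intro image_subsetI, simp add: dK)
  have ca: "continuous_on ?D (\<lambda>p. aa y (fst p) (snd p))"
    unfolding aa_def
    by (intro continuous_intros ciK cK) simp
  have ck: "continuous_on ?D (\<lambda>p. km y (fst p) (snd p))"
    unfolding km_def by (intro cont_cols3 continuous_on_diff cyv cont_smul ca cv cw)
  have dk: "dd (km y (fst p) (snd p)) \<noteq> 0" if "p \<in> ?D" for p
    using claimA[OF y, of "fst p" "snd p"] that by (auto simp: Dom_def)
  show ?thesis unfolding Fm_def
    by (rule continuous_on_compose2[OF cont_inv ck]) (intro image_subsetI, simp add: dk)
qed

lemma image_Fm: assumes y: "y \<in> sC" shows "{g \<in> GL3. conj_act g y \<in> sC} = Fm y ` Dom y"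
proof
  show "{g \<in> GL3. conj_act g y \<in> sC} \<subseteq> Fm y ` Dom y"
  proof
    fix g assume "g \<in> {g \<in> GL3. conj_act g y \<in> sC}"
    then obtain v z where "d3 v (y *v v) z \<noteq> 0" "matrix_inv (km y v z) = g"
      using claimB by blast
    then have "(v, z) \<in> Dom y" "Fm y (v, z) = g" by (auto simp: Dom_def Fm_def)
    then show "g \<in> Fm y ` Dom y" by force
  qed
next
  show "Fm y ` Dom y \<subseteq> {g \<in> GL3. conj_act g y \<in> sC}"
    using claimA[OF y] by (auto simp: Dom_def Fm_def)
qed

definition ispoly :: "(complex \<Rightarrow> complex) \<Rightarrow> bool" where
  "ispoly f \<longleftrightarrow> (\<exists>P. \<forall>t. f t = poly P t)"

lemma ispoly_const: "ispoly (\<lambda>t. c)"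
  unfolding ispoly_def by (rule exI[of _ "[:c:]"]) simp
lemma ispoly_id: "ispoly (\<lambda>t. t)"
  unfolding ispoly_def by (rule exI[of _ "[:0,1:]"]) simp
lemma ispoly_add: "ispoly f \<Longrightarrow> ispoly g \<Longrightarrow> ispoly (\<lambda>t. f t + g t)"
  unfolding ispoly_def by (metis poly_add)
lemma ispoly_diff: "ispoly f \<Longrightarrow> ispoly g \<Longrightarrow> ispoly (\<lambda>t. f t - g t)"
  unfolding ispoly_def by (metis poly_diff)
lemma ispoly_mult: "ispoly f \<Longrightarrow> ispoly g \<Longrightarrow> ispoly (\<lambda>t. f t * g t)"
  unfolding ispoly_def by (metis poly_mult)
lemma ispoly_minus: "ispoly f \<Longrightarrow> ispoly (\<lambda>t. - f t)"
  unfolding ispoly_def by (metis poly_minus)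

lemma conn_Dom: assumes y: "y \<in> sC" shows "connected (Dom y)"
proof -
  have ye: "y$1$2 = 1" "y$2$2 = y$1$1" "y$3$2 = 0" using y by (auto simp: in_sC)
  define p0 :: "(complex^3) \<times> (complex^3)" where "p0 = (vector[0,1,0], vector[0,0,1])"
  have p0D: "p0 \<in> Dom y" unfolding p0_def Dom_def using ye by (simp add: d3_expand mv3)
  define ln where "ln p1 t = (fst p0 + t *s (fst p1 - fst p0), snd p0 + t *s (snd p1 - snd p0))" for p1 t
  define fl where "fl p1 t = d3 (fst (ln p1 t)) (y *v fst (ln p1 t)) (snd (ln p1 t))" for p1 t
  define C where "C p1 = ln p1 ` {t. fl p1 t \<noteq> 0}" for p1
  have ln0: "ln p1 0 = p0" for p1 unfolding ln_def by simp
  have ln1: "ln p1 1 = p1" for p1 unfolding ln_def by simp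
  have CD: "C p1 \<subseteq> Dom y" for p1 unfolding C_def Dom_def fl_def by auto
  have p0C: "p0 \<in> C p1" for p1
  proof -
    have "fl p1 0 \<noteq> 0" using p0D unfolding fl_def ln0 Dom_def by simp
    then show ?thesis unfolding C_def using ln0[of p1] by (metis (mono_tags, lifting) image_eqI mem_Collect_eq)
  qed
  have connC: "connected (C p1)" for p1
  proof -
    have "ispoly (fl p1)"
      unfolding fl_def ln_def
      by (simp only: d3_expand mv3 vsimps fst_conv snd_conv)
         (intro ispoly_add ispoly_diff ispoly_mult ispoly_minus ispoly_const ispoly_id)
    then obtain P where P: "\<And>t. fl p1 t = poly P t" unfolding ispoly_def by blast
    have "P \<noteq> 0"
    proof
      assume "P = 0"
      then have "fl p1 0 = 0" using P by simp
      then show False using p0D unfolding fl_def ln0 Dom_def by simp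
    qed
    then have fin: "finite {t. poly P t = 0}" by (rule poly_roots_finite)
    have eqT: "{t. fl p1 t \<noteq> 0} = - {t. poly P t = 0}" using P by auto
    have "connected {t. fl p1 t \<noteq> 0}" unfolding eqT
      by (rule path_connected_imp_connected[OF path_connected_complement_countable])
         (use fin in \<open>auto intro: countable_finite\<close>)
    moreover have "continuous_on {t. fl p1 t \<noteq> 0} (ln p1)"
      unfolding ln_def by (intro continuous_on_Pair continuous_on_add continuous_on_const cont_smul continuous_on_id)
    ultimately show ?thesis unfolding C_def by (rule connected_continuous_image[rotated])
  qed
  have DU: "Dom y = \<Union> (C ` Dom y)"
  proof
    show "Dom y \<subseteq> \<Union> (C ` Dom y)"
    proof
      fix p1 assume p1: "p1 \<in> Dom y"
      then have "fl p1 1 \<noteq> 0" unfolding fl_def ln1 Dom_def by simp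
      then have "p1 \<in> C p1" unfolding C_def using ln1[of p1] by (metis (mono_tags, lifting) image_eqI mem_Collect_eq)
      then show "p1 \<in> \<Union> (C ` Dom y)" using p1 by blast
    qed
  next
    show "\<Union> (C ` Dom y) \<subseteq> Dom y" using CD by blast
  qed
  have "connected (\<Union> (C ` Dom y))"
  proof (rule connected_Union)
    show "\<And>S. S \<in> C ` Dom y \<Longrightarrow> connected S" using connC by blast
    show "\<Inter> (C ` Dom y) \<noteq> {}" using p0C by blast
  qed
  then show ?thesis using DU[symmetric] by simp
qed

lemma conn_final: assumes y: "y \<in> sC" shows "connected {g \<in> GL3. conj_act g y \<in> sC}"
proof -
  have "connected (Fm y ` Dom y)" by (rule connected_continuous_image[OF cont_Fm[OF y] conn_Dom[OF y]])
  then show ?thesis using image_Fm[OF y] by simp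
qed

theorem lemma7p3:
  shows "sC = {vector [vector [a, 1, 0], vector [b, a, c], vector [d, 0, -2 * a]] | a b c d. True}
     \<and> is_affine_slice e_mat sC
     \<and> (\<forall>y\<in>sC. connected {g \<in> GL3. conj_act g y \<in> sC})"
  proof (intro conjI ballI)
  show "sC = {vector [vector [a, 1, 0], vector [b, a, c], vector [d, 0, -2 * a]] | a b c d. True}"
    using sC_eq unfolding sP_def .
  show "is_affine_slice e_mat sC" by (rule slice)
  fix y assume "y \<in> sC" then show "connected {g \<in> GL3. conj_act g y \<in> sC}" by (rule conn_final)
qed

end
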